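(* The LDP-FPMiner algorithm described below satisfies $\epsilon$-local differential privacy: every user's transaction is used in exactly one randomized report, and the map from the user's transaction to that report is an $\epsilon$-locally differentially private algorithm; all remaining computations are performed by the analyst on the reports only.
   Context: A randomized algorithm $\mathcal{A}$ satisfies $\epsilon$-local differential privacy ($\epsilon$-LDP) if for all inputs $t_i,t_j$ and every possible output $\mathcal{O}$, $\Pr[\mathcal{A}(t_i)=\mathcal{O}]\le e^{\epsilon}\Pr[\mathcal{A}(t_j)=\mathcal{O}]$. Optimized Local Hashing (OLH) with budget $\epsilon$ over a finite domain $D$: with $g=\lceil e^\epsilon+1\rceil$, a user with value $u\in D$ picks a hash $H$ uniformly from a universal family $D\to[g]$, sets $x=H(u)$ and reports $\langle H,y\rangle$ with $y=x$ with probability $\frac{e^\epsilon}{e^\epsilon+g-1}$ and $y=i$ with probability $\frac{1}{e^\epsilon+g-1}$ for each $i\ne x$; this is $\epsilon$-LDP. LDP-FPMiner$(\mathcal{T},\mathcal{X},k,\epsilon)$: users (each holding a transaction $t\subseteq\mathcal{X}$) are randomly partitioned into three disjoint groups $G_1,G_2,G_3$. (1) With $G_1$, the SVIM protocol computes a set $S'$ of $k$ frequent items and their estimated frequencies; in SVIM each user of $G_1$ sends exactly one report produced by OLH with budget $\epsilon$ (about one item sampled from her transaction, or about the size of her transaction pruned to a candidate domain, or about one item sampled from her pruned transaction padded with dummy items). (2) Each user of $G_2$ reports the number $|t\cap S'|$ via OLH with budget $\epsilon$; the analyst sets $M$ to the estimated 80th percentile of these numbers. (3) With $G_3$, a noisy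 FP-tree is built: $G_3$ is split into $M$ disjoint groups $g_1,\dots,g_M$; each user keeps the items of her transaction in $S'$ sorted by descending estimated frequency; at level $l$ the analyst forms (from previously released estimates only) a candidate set $C_l$ of prefixes, and each user of $g_l$ reports once, via OLH with budget $\epsilon$ over $C_l\cup\{\dagger\}$, her first $l$ items (or $\dagger$ if not in $C_l$). (4) The analyst mines the noisy tree with the FP-growth algorithm and releases $k$ itemsets. *)

theory Defs
  imports "HOL-Probability.Probability"
begin

definition ldp :: "real \<Rightarrow> ('t \<Rightarrow> 'o pmf) \<Rightarrow> bool" where
  "ldp \<epsilon> A \<longleftrightarrow> (\<forall>t t' out. pmf (A t) out \<le> exp \<epsilon> * pmf (A t') out)"

definition olh_g :: "real \<Rightarrow> nat" where
  "olh_g \<epsilon> = nat \<lceil>exp \<epsilon> + 1\<rceil>"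

definition universal_family :: "'d set \<Rightarrow> nat \<Rightarrow> ('d \<Rightarrow> nat) set \<Rightarrow> bool" where
  "universal_family D g H \<longleftrightarrow> finite H \<and> H \<noteq> {} \<and>
     (\<forall>h\<in>H. \<forall>u\<in>D. h u < g) \<and>
     (\<forall>x\<in>D. \<forall>y\<in>D. x \<noteq> y \<longrightarrow> real (card {h\<in>H. h x = h y}) \<le> real (card H) / real g)"

definition olh_perturb :: "real \<Rightarrow> nat \<Rightarrow> nat \<Rightarrow> nat pmf" where
  "olh_perturb \<epsilon> g x =
     bernoulli_pmf (exp \<epsilon> / (exp \<epsilon> + real g - 1)) \<bind>
       (\<lambda>b. if b then return_pmf x else pmf_of_set ({0..<g} - {x}))"

definition olh :: "real \<Rightarrow> ('d \<Rightarrow> nat) set \<Rightarrow> 'd \<Rightarrow> (('d \<Rightarrow> nat) \<times> nat) pmf" where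
  "olh \<epsilon> H u = pmf_of_set H \<bind> (\<lambda>h. map_pmf (\<lambda>y. (h, y)) (olh_perturb \<epsilon> (olh_g \<epsilon>) (h u)))"

text \<open>Interactive protocol: users report one at a time in the order given by a list;
  the mechanism used in a round is chosen by the analyst from the reports
  released so far (the transcript prefix).\<close>
fun run_protocol ::
  "('r list \<Rightarrow> 't \<Rightarrow> 'r pmf) \<Rightarrow> (nat \<Rightarrow> 't) \<Rightarrow> 'r list \<Rightarrow> nat list \<Rightarrow> 'r list pmf" where
  "run_protocol mech T acc [] = return_pmf acc"
| "run_protocol mech T acc (u # us) =
     mech acc (T u) \<bind> (\<lambda>r. run_protocol mech T (acc @ [r]) us)"

end

theory Submission
  imports Defs
begin

lemma perturb_pmf:
  assumes x: "x < g" and g: "g \<ge> 2"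
  shows "pmf (olh_perturb \<epsilon> g x) y =
    (if y = x then exp \<epsilon> / (exp \<epsilon> + real g - 1) else if y < g then 1 / (exp \<epsilon> + real g - 1) else 0)"
proof -
  define p where "p = exp \<epsilon> / (exp \<epsilon> + real g - 1)"
  have d: "exp \<epsilon> + real g - 1 > 0" proof -
    have "exp \<epsilon> > 0" by simp
    moreover have "real g \<ge> 2" using g by simp
    ultimately show ?thesis by linarith
  qed
  have p0: "0 \<le> p" "p \<le> 1" using d g unfolding p_def by (auto simp: field_simps)
  have ne: "(if x = 0 then 1 else 0) \<in> {0..<g} - {x}" using x g by auto
  have fin: "finite ({0..<g} - {x})" "{0..<g} - {x} \<noteq> {}" using ne by auto
  have c: "card ({0..<g} - {x}) = g - 1" using x by simp
  have "pmf (olh_perturb \<epsilon> g x) y = p * pmf (return_pmf x) y + (1 - p) * pmf (pmf_of_set ({0..<g} - {x})) y"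
    unfolding olh_perturb_def p_def[symmetric] pmf_bind
    by (subst integral_measure_pmf[where A=UNIV]) (auto simp: p0 UNIV_bool)
  also have "\<dots> = (if y = x then p else if y < g then (1 - p) / (real g - 1) else 0)"
    using fin c g x by (auto simp: indicator_def of_nat_diff)
  also have "(1 - p) / (real g - 1) = 1 / (exp \<epsilon> + real g - 1)"
  proof -
    have "1 - p = (real g - 1) / (exp \<epsilon> + real g - 1)"
      using d unfolding p_def by (simp add: field_simps)
    moreover have "real g - 1 > 0" using g by simp
    ultimately show ?thesis by simp
  qed
  finally show ?thesis unfolding p_def by simp
qed

definition domin :: "real \<Rightarrow> 'a pmf \<Rightarrow> 'a pmf \<Rightarrow> bool" where
  "domin c M M' \<longleftrightarrow> (\<forall>x. pmf M x \<le> c * pmf M' x)"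

lemma dom_bind1:
  assumes "domin c M M'" "c \<ge> 0"
  shows "domin c (bind_pmf M f) (bind_pmf M' f)"
  unfolding domin_def
proof
  fix x
  have "ennreal (pmf (M \<bind> f) x) = (\<integral>\<^sup>+ y. ennreal (pmf M y) * pmf (f y) x \<partial>count_space UNIV)"
    by (simp add: ennreal_pmf_bind nn_integral_measure_pmf)
  also have "\<dots> \<le> (\<integral>\<^sup>+ y. ennreal c * (ennreal (pmf M' y) * pmf (f y) x) \<partial>count_space UNIV)"
    apply (rule nn_integral_mono)
    using assms unfolding domin_def
    by (metis ennreal_leI ennreal_mult'' mult.assoc mult_right_mono pmf_nonneg ennreal_mult)
  also have "\<dots> = ennreal c * ennreal (pmf (M' \<bind> f) x)"
    by (simp add: nn_integral_cmult ennreal_pmf_bind nn_integral_measure_pmf)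
  also have "\<dots> = ennreal (c * pmf (M' \<bind> f) x)" using assms by (simp add: ennreal_mult)
  finally show "pmf (M \<bind> f) x \<le> c * pmf (M' \<bind> f) x"
    using assms by (simp add: ennreal_le_iff)
qed

lemma dom_bind2:
  assumes "\<And>r. domin c (f r) (f' r)" "c \<ge> 0"
  shows "domin c (bind_pmf M f) (bind_pmf M f')"
  unfolding domin_def
proof
  fix x
  have "ennreal (pmf (M \<bind> f) x) = (\<integral>\<^sup>+ y. ennreal (pmf (f y) x) \<partial>M)"
    by (simp add: ennreal_pmf_bind)
  also have "\<dots> \<le> (\<integral>\<^sup>+ y. ennreal c * ennreal (pmf (f' y) x) \<partial>M)"
  proof (rule nn_integral_mono)
    fix y
    have "pmf (f y) x \<le> c * pmf (f' y) x" using assms(1) unfolding domin_def by blast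
    then show "ennreal (pmf (f y) x) \<le> ennreal c * ennreal (pmf (f' y) x)"
      using assms(2) by (simp add: ennreal_mult[symmetric] ennreal_leI)
  qed
  also have "\<dots> = ennreal c * ennreal (pmf (M \<bind> f' :: _ pmf) x)"
    by (simp add: nn_integral_cmult ennreal_pmf_bind)
  also have "\<dots> = ennreal (c * pmf (M \<bind> f' :: _ pmf) x)" using assms by (simp add: ennreal_mult)
  finally show "pmf (M \<bind> f) x \<le> c * pmf (M \<bind> f' :: _ pmf) x"
    using assms by (simp add: ennreal_le_iff)
qed

lemma dom_map:
  assumes "domin c M M'" "c \<ge> 0"
  shows "domin c (map_pmf h M) (map_pmf h M')"
  using dom_bind1[OF assms, of "\<lambda>x. return_pmf (h x)"] by (simp add: map_pmf_def)

lemma run_eq: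
  assumes "\<forall>j. j \<noteq> i \<longrightarrow> T j = T' j" "i \<notin> set us"
  shows "run_protocol mech T acc us = run_protocol mech T' acc us"
  using assms(2) by (induction us arbitrary: acc) (auto simp: assms(1))

lemma run_dom:
  assumes "\<forall>j. j \<noteq> i \<longrightarrow> T j = T' j" "distinct us"
    and "\<And>acc t t'. domin c (mech acc t) (mech acc t')" "c \<ge> 1"
  shows "domin c (run_protocol mech T acc us) (run_protocol mech T' acc us)"
  using assms(2)
proof (induction us arbitrary: acc)
  case Nil
  then show ?case using assms(4) by (simp add: domin_def indicator_def)
next
  case (Cons u us)
  show ?case
  proof (cases "u = i")
    case True
    then have "i \<notin> set us" using Cons.prems by auto
    then have e: "\<And>a. run_protocol mech T a us = run_protocol mech T' a us"
      using run_eq[OF assms(1)] by blast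
    show ?thesis unfolding run_protocol.simps e
      by (rule dom_bind1[OF assms(3)], use assms(4) in simp)
  next
    case False
    then have "T u = T' u" using assms(1) by auto
    have "distinct us" using Cons.prems by simp
    then have "\<And>r. domin c (run_protocol mech T (acc @ [r]) us) (run_protocol mech T' (acc @ [r]) us)"
      using Cons.IH by blast
    then show ?thesis unfolding run_protocol.simps \<open>T u = T' u\<close>
      using assms(4) by (intro dom_bind2) auto
  qed
qed

lemma pmf_olh:
  assumes H: "finite H" "H \<noteq> {}"
  shows "pmf (olh \<epsilon> H u) (h0, y) =
    (if h0 \<in> H then pmf (olh_perturb \<epsilon> (olh_g \<epsilon>) (h0 u)) y / real (card H) else 0)"
proof -
  have m: "pmf (map_pmf (\<lambda>y. (h, y)) P) (h0, y) = (if h = h0 then pmf P y else 0)" for h and P :: "nat pmf"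
  proof (cases "h = h0")
    case True
    have "inj (\<lambda>y. (h, y))" by (auto simp: inj_def)
    then show ?thesis using True pmf_map_inj'[of "\<lambda>y. (h, y)" P y] by simp
  next
    case False
    then have "(h0, y) \<notin> set_pmf (map_pmf (\<lambda>y. (h, y)) P)" by auto
    then show ?thesis using False by (simp add: set_pmf_eq)
  qed
  show ?thesis
    unfolding olh_def pmf_bind_pmf_of_set[OF H(2) H(1)] m
    using H by (simp add: sum.delta')
qed

lemma olh_g_ge: "\<epsilon> > 0 \<Longrightarrow> olh_g \<epsilon> \<ge> 2"
proof -
  assume "\<epsilon> > 0"
  have "exp \<epsilon> > 0" by simp
  then have "\<lceil>exp \<epsilon> + 1\<rceil> \<ge> 2" by linarith
  then show ?thesis unfolding olh_g_def by linarith
qed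

lemma olh_bounds:
  assumes eps: "\<epsilon> > 0" and uf: "universal_family D (olh_g \<epsilon>) H" and u: "u \<in> D"
  defines "L \<equiv> (\<lambda>(h, y). if h \<in> H \<and> y < olh_g \<epsilon> then 1 / (exp \<epsilon> + real (olh_g \<epsilon>) - 1) / real (card H) else 0)"
  shows "L z \<le> pmf (olh \<epsilon> H u) z \<and> pmf (olh \<epsilon> H u) z \<le> exp \<epsilon> * L z"
proof -
  obtain h0 y where o: "z = (h0, y)" by (cases z)
  have H: "finite H" "H \<noteq> {}" and hb: "\<forall>h\<in>H. h u < olh_g \<epsilon>"
    using uf u unfolding universal_family_def by auto
  have g: "olh_g \<epsilon> \<ge> 2" using olh_g_ge[OF eps] .
  have d: "exp \<epsilon> + real (olh_g \<epsilon>) - 1 > 0" using g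
  proof -
    have "exp \<epsilon> > 0" by simp
    moreover have "real (olh_g \<epsilon>) \<ge> 2" using g by simp
    ultimately show ?thesis by linarith
  qed
  have e1: "exp \<epsilon> \<ge> 1" using eps by simp
  have cH: "real (card H) > 0" using H by (simp add: card_gt_0_iff)
  show ?thesis
  proof (cases "h0 \<in> H")
    case False
    then show ?thesis unfolding o pmf_olh[OF H] L_def by simp
  next
    case True
    then have x: "h0 u < olh_g \<epsilon>" using hb by auto
    define D where "D = exp \<epsilon> + real (olh_g \<epsilon>) - 1"
    have D: "D > 0" using d D_def by simp
    have a1: "1 / D / card H \<le> exp \<epsilon> / D / card H"
      using D cH e1 by (intro divide_right_mono) auto
    have a2: "exp \<epsilon> / D / card H = exp \<epsilon> * (1 / D / card H)" by simp
    have a3: "1 / D / card H \<le> exp \<epsilon> * (1 / D / card H)"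
      using D cH e1 by (simp add: mult_le_cancel_right1 field_simps)
    show ?thesis unfolding o pmf_olh[OF H] L_def perturb_pmf[OF x g] D_def[symmetric]
      using True a1 a2 a3 x by auto
  qed
qed

lemma mix_bounds:
  fixes f :: "'a \<Rightarrow> real"
  assumes "\<And>u. u \<in> set_pmf M \<Longrightarrow> a \<le> f u \<and> f u \<le> b" "a \<ge> 0"
  shows "ennreal a \<le> (\<integral>\<^sup>+ u. ennreal (f u) \<partial>measure_pmf M) \<and> (\<integral>\<^sup>+ u. ennreal (f u) \<partial>measure_pmf M) \<le> ennreal b"
proof
  have "(\<integral>\<^sup>+ u. ennreal a \<partial>measure_pmf M) \<le> (\<integral>\<^sup>+ u. ennreal (f u) \<partial>measure_pmf M)"
    by (rule nn_integral_mono_AE) (use assms in \<open>auto simp: AE_measure_pmf_iff intro!: ennreal_leI\<close>)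
  then show "ennreal a \<le> (\<integral>\<^sup>+ u. ennreal (f u) \<partial>measure_pmf M)" by (simp add: measure_pmf.emeasure_space_1)
  have "(\<integral>\<^sup>+ u. ennreal (f u) \<partial>measure_pmf M) \<le> (\<integral>\<^sup>+ u. ennreal b \<partial>measure_pmf M)"
    by (rule nn_integral_mono_AE) (use assms in \<open>auto simp: AE_measure_pmf_iff intro!: ennreal_leI\<close>)
  then show "(\<integral>\<^sup>+ u. ennreal (f u) \<partial>measure_pmf M) \<le> ennreal b" by (simp add: measure_pmf.emeasure_space_1)
qed

theorem theorem4p3:
  fixes \<epsilon> :: real
    and Dom :: "(('d \<Rightarrow> nat) \<times> nat) list \<Rightarrow> 'd set"
    and Hs :: "(('d \<Rightarrow> nat) \<times> nat) list \<Rightarrow> ('d \<Rightarrow> nat) set"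
    and pre :: "(('d \<Rightarrow> nat) \<times> nat) list \<Rightarrow> 't \<Rightarrow> 'd pmf"
    and order :: "nat list"
    and n :: nat
    and analyst :: "(('d \<Rightarrow> nat) \<times> nat) list \<Rightarrow> 'o"
  assumes eps: "\<epsilon> > 0"
    and dom_fin: "\<And>acc. finite (Dom acc)"
    and hash: "\<And>acc. universal_family (Dom acc) (olh_g \<epsilon>) (Hs acc)"
    and pre_dom: "\<And>acc t. set_pmf (pre acc t) \<subseteq> Dom acc"
    and order_distinct: "distinct order"
    and order_users: "set order = {0..<n}"
  shows "(\<forall>acc. ldp \<epsilon> (\<lambda>t. pre acc t \<bind> olh \<epsilon> (Hs acc))) \<and>
         (\<forall>i T T' out. (\<forall>j. j \<noteq> i \<longrightarrow> T j = T' j) \<longrightarrow>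
            pmf (map_pmf analyst (run_protocol (\<lambda>acc t. pre acc t \<bind> olh \<epsilon> (Hs acc)) T [] order)) out
            \<le> exp \<epsilon> * pmf (map_pmf analyst (run_protocol (\<lambda>acc t. pre acc t \<bind> olh \<epsilon> (Hs acc)) T' [] order)) out)"
proof -
  have part1: "ldp \<epsilon> (\<lambda>t. pre acc t \<bind> olh \<epsilon> (Hs acc))" for acc
    unfolding ldp_def
  proof (intro allI)
    fix t t' z
    define L where "L \<equiv> (\<lambda>(h, y). if h \<in> Hs acc \<and> y < olh_g \<epsilon> then 1 / (exp \<epsilon> + real (olh_g \<epsilon>) - 1) / real (card (Hs acc)) else 0)"
    have L0: "L z \<ge> 0" unfolding L_def
    proof -
      have "exp \<epsilon> + real (olh_g \<epsilon>) - 1 > 0" using olh_g_ge[OF eps]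
      proof -
        have "exp \<epsilon> > 0" by simp
        moreover have "real (olh_g \<epsilon>) \<ge> 2" using olh_g_ge[OF eps] by simp
        ultimately show ?thesis by linarith
      qed
      then show "0 \<le> (case z of (h, y) \<Rightarrow> if h \<in> Hs acc \<and> y < olh_g \<epsilon> then 1 / (exp \<epsilon> + real (olh_g \<epsilon>) - 1) / real (card (Hs acc)) else 0)"
        by (auto split: prod.splits)
    qed
    have bnd: "L z \<le> pmf (olh \<epsilon> (Hs acc) u) z \<and> pmf (olh \<epsilon> (Hs acc) u) z \<le> exp \<epsilon> * L z"
      if "u \<in> set_pmf (pre acc s)" for u s
      using olh_bounds[OF eps hash, of u acc z] that pre_dom unfolding L_def by blast
    have "ennreal (pmf (pre acc t \<bind> olh \<epsilon> (Hs acc)) z) \<le> ennreal (exp \<epsilon> * L z)"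
      unfolding ennreal_pmf_bind using mix_bounds[of "pre acc t" "L z" "\<lambda>u. pmf (olh \<epsilon> (Hs acc) u) z", OF bnd[of _ t] L0] by blast
    then have 1: "pmf (pre acc t \<bind> olh \<epsilon> (Hs acc)) z \<le> exp \<epsilon> * L z"
      using L0 by (simp add: ennreal_le_iff)
    have "ennreal (L z) \<le> ennreal (pmf (pre acc t' \<bind> olh \<epsilon> (Hs acc)) z)"
      unfolding ennreal_pmf_bind using mix_bounds[of "pre acc t'" "L z" "\<lambda>u. pmf (olh \<epsilon> (Hs acc) u) z", OF bnd[of _ t'] L0] by blast
    then have 2: "L z \<le> pmf (pre acc t' \<bind> olh \<epsilon> (Hs acc)) z"
      by (simp add: ennreal_le_iff)
    show "pmf (pre acc t \<bind> olh \<epsilon> (Hs acc)) z \<le> exp \<epsilon> * pmf (pre acc t' \<bind> olh \<epsilon> (Hs acc)) z"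
      using 1 2 by (smt (verit) exp_gt_zero mult_left_mono)
  qed
  have e1: "exp \<epsilon> \<ge> 1" using eps by simp
  show ?thesis
  proof (intro conjI allI impI)
    fix acc show "ldp \<epsilon> (\<lambda>t. pre acc t \<bind> olh \<epsilon> (Hs acc))" by (rule part1)
  next
    fix i :: nat and T T' :: "nat \<Rightarrow> 't" and out
    assume TT: "\<forall>j. j \<noteq> i \<longrightarrow> T j = T' j"
    have "domin (exp \<epsilon>) (run_protocol (\<lambda>acc t. pre acc t \<bind> olh \<epsilon> (Hs acc)) T [] order)
                            (run_protocol (\<lambda>acc t. pre acc t \<bind> olh \<epsilon> (Hs acc)) T' [] order)"
      by (rule run_dom[OF TT order_distinct _ e1]) (use part1 in \<open>simp add: ldp_def domin_def\<close>)
    then have "domin (exp \<epsilon>) (map_pmf analyst (run_protocol (\<lambda>acc t. pre acc t \<bind> olh \<epsilon> (Hs acc)) T [] order))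
                  (map_pmf analyst (run_protocol (\<lambda>acc t. pre acc t \<bind> olh \<epsilon> (Hs acc)) T' [] order))"
      by (rule dom_map) simp
    then show "pmf (map_pmf analyst (run_protocol (\<lambda>acc t. pre acc t \<bind> olh \<epsilon> (Hs acc)) T [] order)) out
            \<le> exp \<epsilon> * pmf (map_pmf analyst (run_protocol (\<lambda>acc t. pre acc t \<bind> olh \<epsilon> (Hs acc)) T' [] order)) out"
      unfolding domin_def by blast
  qed
qed

end
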